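(* Let $V\in(\mathbb{R}\cup\{-\infty\})^{n\times p}$ have no row and no column identically equal to $-\infty$. Then $$\operatorname{inrad}(\operatorname{Col}(V))=\max_J \operatorname{inrad}(\operatorname{Col}(V[J])),$$ where the maximum is taken over all subsets $J\subset[p]$ of cardinality $n$ (with the convention that the maximum is $0$ if $p<n$). Moreover, if the inner radius $\operatorname{inrad}(\operatorname{Col}(V))$ is positive, the maximum is achieved by some $J$ such that $\operatorname{Col}(V[J])$ is simplicial.
   Context: $\mathbb{R}_{\max}=\mathbb{R}\cup\{-\infty\}$. $V[J]$ is the submatrix of $V$ formed by the columns with indices in $J$. $\operatorname{Col}(W)=\{Wx\}$ is the tropical cone generated by the columns of $W$, with $(Wx)_i=\max_k(W_{ik}+x_k)$. Hilbert's projective metric: $d(x,y)=\inf\{\lambda-\mu:\lambda,\mu\in\mathbb{R},\ \mu+y_i\le x_i\le\lambda+y_i\ \forall i\}$; $B(a,r)=\{x:d(a,x)\le r\}$. $\operatorname{inrad}(\mathcal C)$ is the supremum of the radii of balls $B(a,r)$ with $a\in\mathbb{R}^n$ included in $\mathcal C$. A vector $u$ of a tropical cone $\mathcal C$ is extreme if $u=v\vee w$ ($\vee$ = entrywise max) with $v,w\in\mathcal C$ implies $u=v$ or $u=w$; a tropical cone in $\mathbb{R}_{\max}^n$ is simplicial if it has precisely $n$ extreme directions (sets $\{\lambda+u:\lambda\in\mathbb{R}_{\max}\}$ with $u$ extreme). *)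

theory Defs
  imports "HOL-Analysis.Analysis" "HOL-Library.Extended_Real"
begin

text \<open>Max-plus semiring R_max = R \<union> {-\<infinity>} is represented inside ereal; elements of
R_max are the ereals different from \<infinity>. Vectors of R_max^n are ereal^'n, matrices
in R_max^{n x p} are ereal^'p^'n (rows indexed by 'n, columns by 'p).\<close>

definition rmax_vec :: "ereal^'n \<Rightarrow> bool" where
  "rmax_vec x \<longleftrightarrow> (\<forall>i. x$i \<noteq> \<infinity>)"

definition Col :: "'p set \<Rightarrow> ereal^'p^'n \<Rightarrow> (ereal^'n) set" where
  "Col K V = {y. \<exists>x::ereal^'p. rmax_vec x \<and> y = (\<chi> i. SUP k\<in>K. V$i$k + x$k)}"

definition hdist :: "ereal^'n \<Rightarrow> ereal^'n \<Rightarrow> ereal" where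
  "hdist x y = Inf {ereal (l - m) | l m. \<forall>i. ereal m + y$i \<le> x$i \<and> x$i \<le> ereal l + y$i}"

definition hball :: "real^'n \<Rightarrow> real \<Rightarrow> (ereal^'n) set" where
  "hball a r = {x. rmax_vec x \<and> hdist (\<chi> i. ereal (a$i)) x \<le> ereal r}"

definition inrad :: "(ereal^'n) set \<Rightarrow> ereal" where
  "inrad C = Sup {ereal r | r. \<exists>a::real^'n. hball a r \<subseteq> C}"

definition extreme :: "(ereal^'n) set \<Rightarrow> ereal^'n \<Rightarrow> bool" where
  "extreme C u \<longleftrightarrow> u \<in> C \<and> u \<noteq> (\<chi> i. -\<infinity>) \<and>
     (\<forall>v\<in>C. \<forall>w\<in>C. u = (\<chi> i. max (v$i) (w$i)) \<longrightarrow> u = v \<or> u = w)"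

definition ext_dirs :: "(ereal^'n) set \<Rightarrow> (ereal^'n) set set" where
  "ext_dirs C = {{(\<chi> i. l + u$i) | l. l \<noteq> \<infinity>} | u. extreme C u}"

definition simplicial :: "(ereal^'n) set \<Rightarrow> bool" where
  "simplicial C \<longleftrightarrow> finite (ext_dirs C) \<and> card (ext_dirs C) = CARD('n)"

end

theory Submission
  imports Defs
begin

lemma SUP_attained:
  fixes f :: "'a \<Rightarrow> ereal"
  assumes "finite F" "F \<noteq> {}"
  shows "\<exists>k\<in>F. (SUP k\<in>F. f k) = f k"
proof -
  have "Sup (f ` F) \<in> f ` F"
    using assms by (simp add: cSup_eq_Max)
  then show ?thesis by auto
qed

lemma Col_mono:
  fixes V :: "ereal^'p^'n"
  assumes ent: "\<forall>i k. V$i$k \<noteq> \<infinity>" and "F \<subseteq> J"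
  shows "Col F V \<subseteq> Col J V"
proof
  fix y assume "y \<in> Col F V"
  then obtain x where x: "rmax_vec x" "y = (\<chi> i. SUP k\<in>F. V$i$k + x$k)"
    unfolding Col_def by auto
  define x' where "x' = (\<chi> k. if k \<in> F then x$k else -\<infinity>)"
  have "rmax_vec x'" using x(1) unfolding rmax_vec_def x'_def by auto
  moreover have "(SUP k\<in>J. V$i$k + x'$k) = (SUP k\<in>F. V$i$k + x$k)" for i
  proof (rule antisym)
    show "(SUP k\<in>J. V$i$k + x'$k) \<le> (SUP k\<in>F. V$i$k + x$k)"
    proof (rule SUP_least)
      fix k assume "k \<in> J"
      show "V$i$k + x'$k \<le> (SUP k\<in>F. V$i$k + x$k)"
      proof (cases "k \<in> F")
        case True then show ?thesis unfolding x'_def by (auto intro: SUP_upper)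
      next
        case False
        have eq: "V$i$k + -\<infinity> = -\<infinity>" using ent by (cases "V$i$k") auto
        have "x'$k = -\<infinity>" using False unfolding x'_def by simp
        then have "V$i$k + x'$k = -\<infinity>" by (simp only: eq)
        then show ?thesis by (metis bot_ereal_def bot_least)
      qed
    qed
    show "(SUP k\<in>F. V$i$k + x$k) \<le> (SUP k\<in>J. V$i$k + x'$k)"
    proof (rule SUP_least)
      fix k assume "k \<in> F"
      then have "V$i$k + x$k = V$i$k + x'$k" "k \<in> J" using assms(2) unfolding x'_def by auto
      then show "V$i$k + x$k \<le> (SUP k\<in>J. V$i$k + x'$k)" by (auto intro: SUP_upper)
    qed
  qed
  ultimately show "y \<in> Col J V" unfolding Col_def using x(2) by auto
qed

lemma hdist_nonneg:
  fixes a :: "real^'n"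
  shows "0 \<le> hdist (\<chi> i. ereal (a$i)) y"
  unfolding hdist_def
proof (rule Inf_greatest, clarify)
  fix l m :: real assume h: "\<forall>i. ereal m + y$i \<le> (\<chi> i. ereal (a$i))$i \<and> (\<chi> i. ereal (a$i))$i \<le> ereal l + y$i"
  obtain i :: 'n where True by auto
  from h have "ereal m + y$i \<le> ereal (a$i)" "ereal (a$i) \<le> ereal l + y$i" by auto
  then show "0 \<le> ereal (l - m)" by (cases "y$i") auto
qed

lemma hball_neg:
  assumes "r < 0" shows "hball a r = {}"
proof -
  have False if "hdist (\<chi> i. ereal (a$i)) x \<le> ereal r" for x
  proof -
    have "0 \<le> ereal r" using hdist_nonneg[of a x] that by (rule order_trans)
    then show False using assms by simp
  qed
  then show ?thesis unfolding hball_def by blast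
qed

lemma hdist_le:
  fixes a :: "real^'n"
  assumes "rmax_vec y" "hdist (\<chi> i. ereal (a$i)) y \<le> ereal r"
  shows "\<exists>z. y = (\<chi> i. ereal (z i)) \<and> (\<forall>i l. z l - a$l \<le> z i - a$i + r)"
proof -
  have fin: "y$i \<noteq> -\<infinity>" for i
  proof
    assume yi: "y$i = -\<infinity>"
    have "{ereal (l - m) | l m. \<forall>i. ereal m + y$i \<le> (\<chi> i. ereal (a$i))$i \<and> (\<chi> i. ereal (a$i))$i \<le> ereal l + y$i} = {}"
    proof -
      have "\<not> (ereal (a$i) \<le> ereal l + y$i)" for l using yi by simp
      then show ?thesis by fastforce
    qed
    then have "hdist (\<chi> i. ereal (a$i)) y = \<infinity>"
      unfolding hdist_def by (metis Inf_empty top_ereal_def)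
    then show False using assms(2) by simp
  qed
  define z where "z i = real_of_ereal (y$i)" for i
  have "y$i = ereal (z i)" for i
    using fin[of i] assms(1) unfolding z_def rmax_vec_def by (cases "y$i") auto
  then have yz: "y = (\<chi> i. ereal (z i))" by (simp add: vec_eq_iff)
  moreover have "z l - a$l \<le> z i - a$i + r" for i l
  proof (rule ccontr)
    assume c: "\<not> ?thesis"
    have "ereal ((z l - a$l) - (z i - a$i)) \<le> hdist (\<chi> i. ereal (a$i)) y"
      unfolding hdist_def
    proof (rule Inf_greatest, clarify)
      fix l' m' :: real assume h: "\<forall>i. ereal m' + y$i \<le> (\<chi> i. ereal (a$i))$i \<and> (\<chi> i. ereal (a$i))$i \<le> ereal l' + y$i"
      from h[rule_format, of i] h[rule_format, of l] show "ereal ((z l - a$l) - (z i - a$i)) \<le> ereal (l' - m')"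
        unfolding yz by auto
    qed
    then have "ereal ((z l - a$l) - (z i - a$i)) \<le> ereal r" using assms(2) by (rule order_trans)
    then show False using c by simp
  qed
  ultimately show ?thesis by blast
qed


lemma ball_gap:
  fixes V :: "ereal^'p^'n" and a :: "real^'n"
  assumes ent: "\<forall>i k. V$i$k \<noteq> \<infinity>" and r: "r > 0" and sub: "hball a r \<subseteq> Col J V"
  shows "\<exists>kk w. \<forall>i. kk i \<in> J \<and> V$i$(kk i) = ereal (w i) \<and>
            (\<forall>l. l \<noteq> i \<longrightarrow> V$l$(kk i) \<le> ereal (w i - a$i + a$l - r))"
proof -
  have "\<exists>k w. k \<in> J \<and> V$j$k = ereal w \<and> (\<forall>l. l \<noteq> j \<longrightarrow> V$l$k \<le> ereal (w - a$j + a$l - r))" for j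
  proof -
    define g :: "ereal^'n" where "g = (\<chi> l. ereal (if l = j then a$l else a$l - r))"
    have "ereal (r - 0) \<in> {ereal (l - m) | l m. \<forall>i. ereal m + g$i \<le> (\<chi> i. ereal (a$i))$i \<and> (\<chi> i. ereal (a$i))$i \<le> ereal l + g$i}"
    proof -
      have P: "\<forall>i. ereal 0 + g$i \<le> (\<chi> i. ereal (a$i))$i \<and> (\<chi> i. ereal (a$i))$i \<le> ereal r + g$i"
        unfolding g_def using r by auto
      show ?thesis unfolding mem_Collect_eq
        by (rule exI[where x=r], rule exI[where x=0], rule conjI[OF refl P])
    qed
    then have "hdist (\<chi> i. ereal (a$i)) g \<le> ereal (r - 0)" unfolding hdist_def
      by (rule Inf_lower)
    then have "hdist (\<chi> i. ereal (a$i)) g \<le> ereal r" by simp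
    moreover have "rmax_vec g" unfolding rmax_vec_def g_def by auto
    ultimately have "g \<in> Col J V" using sub unfolding hball_def by auto
    then obtain x where x: "rmax_vec x" "g = (\<chi> i. SUP k\<in>J. V$i$k + x$k)"
      unfolding Col_def by auto
    have gj: "(SUP k\<in>J. V$j$k + x$k) = ereal (a$j)"
    proof -
      have "g$j = (SUP k\<in>J. V$j$k + x$k)" using x(2) by simp
      moreover have "g$j = ereal (a$j)" unfolding g_def by simp
      ultimately show ?thesis by simp
    qed
    have "J \<noteq> {}" using gj by (auto simp: bot_ereal_def)
    then obtain k where k1: "k \<in> J" and k2: "(SUP k\<in>J. V$j$k + x$k) = V$j$k + x$k"
      using SUP_attained[where F=J and f="\<lambda>k. V$j$k + x$k", OF finite \<open>J \<noteq> {}\<close>] by blast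
    have k: "k \<in> J" "V$j$k + x$k = ereal (a$j)" using k1 k2 gj by auto
    obtain w where w: "V$j$k = ereal w"
      using k(2) ent x(1) unfolding rmax_vec_def by (cases "V$j$k"; cases "x$k") auto
    obtain c where c: "x$k = ereal c"
      using k(2) x(1) unfolding rmax_vec_def by (cases "x$k") (auto simp: w)
    have wc: "w + c = a$j" using k(2) w c by simp
    have "V$l$k \<le> ereal (w - a$j + a$l - r)" if "l \<noteq> j" for l
    proof -
      have "V$l$k + x$k \<le> (SUP k\<in>J. V$l$k + x$k)" using k(1) by (auto intro: SUP_upper)
      also have "\<dots> = g$l" using x(2) by simp
      also have "\<dots> = ereal (a$l - r)" using that unfolding g_def by simp
      finally have "V$l$k + ereal c \<le> ereal (a$l - r)" using c by simp
      then show ?thesis using wc by (cases "V$l$k") auto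
    qed
    then show ?thesis using k(1) w by blast
  qed
  then have "\<forall>j. \<exists>k w. k \<in> J \<and> V$j$k = ereal w \<and> (\<forall>l. l \<noteq> j \<longrightarrow> V$l$k \<le> ereal (w - a$j + a$l - r))" by blast
  from choice[OF this] obtain kk where kk: "\<forall>j. \<exists>w. kk j \<in> J \<and> V$j$(kk j) = ereal w \<and> (\<forall>l. l \<noteq> j \<longrightarrow> V$l$(kk j) \<le> ereal (w - a$j + a$l - r))" by blast
  from choice[OF kk] obtain w where kkw: "\<forall>j. kk j \<in> J \<and> V$j$(kk j) = ereal (w j) \<and> (\<forall>l. l \<noteq> j \<longrightarrow> V$l$(kk j) \<le> ereal (w j - a$j + a$l - r))" by blast
  show ?thesis by (rule exI[where x=kk], rule exI[where x=w], rule kkw)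
qed

lemma gapD:
  assumes "\<forall>i. V$i$(kk i) = ereal (w i) \<and>
            (\<forall>l. l \<noteq> i \<longrightarrow> V$l$(kk i) \<le> ereal (w i - a$i + a$l - r))"
  shows gapD1: "V$i$(kk i) = ereal (w i)"
    and gapD2: "l \<noteq> i \<Longrightarrow> V$l$(kk i) \<le> ereal (w i - a$i + a$l - r)"
proof -
  show "V$i$(kk i) = ereal (w i)" using assms[THEN spec[where x=i]] by (rule conjunct1)
  assume "l \<noteq> i"
  have "\<forall>l. l \<noteq> i \<longrightarrow> V$l$(kk i) \<le> ereal (w i - a$i + a$l - r)" using assms[THEN spec[where x=i]] by (rule conjunct2)
  then show "V$l$(kk i) \<le> ereal (w i - a$i + a$l - r)" using \<open>l \<noteq> i\<close> by simp
qed

lemma gap_inj: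
  fixes V :: "ereal^'p^'n" and a :: "real^'n"
  assumes r: "r > 0" and gap: "\<forall>i. V$i$(kk i) = ereal (w i) \<and>
            (\<forall>l. l \<noteq> i \<longrightarrow> V$l$(kk i) \<le> ereal (w i - a$i + a$l - r))"
  shows "inj kk"
proof (rule injI, rule ccontr)
  fix i j assume e: "kk i = kk j" and ne: "i \<noteq> j"
  have "V$j$(kk i) \<le> ereal (w i - a$i + a$j - r)" using gapD2[OF gap] ne by metis
  moreover have "V$i$(kk j) \<le> ereal (w j - a$j + a$i - r)" using gapD2[OF gap] ne by metis
  moreover have gj: "V$j$(kk j) = ereal (w j)" "V$i$(kk i) = ereal (w i)" using gapD1[OF gap] by metis+
  moreover have "V$j$(kk i) = ereal (w j)" "V$i$(kk j) = ereal (w i)" using gj e by simp_all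
  ultimately have "w j \<le> w i - a$i + a$j - r" "w i \<le> w j - a$j + a$i - r" by simp_all
  then show False using r by linarith
qed

lemma gap_ball:
  fixes V :: "ereal^'p^'n" and a :: "real^'n"
  assumes ent: "\<forall>i k. V$i$k \<noteq> \<infinity>" and r: "r > 0" and gap: "\<forall>i. kk i \<in> J \<and> V$i$(kk i) = ereal (w i) \<and>
            (\<forall>l. l \<noteq> i \<longrightarrow> V$l$(kk i) \<le> ereal (w i - a$i + a$l - r))"
  shows "hball a r \<subseteq> Col J V"
proof
  have kkJ: "kk i \<in> J" for i using gap[THEN spec[where x=i]] by (rule conjunct1)
  have gap': "\<forall>i. V$i$(kk i) = ereal (w i) \<and>
            (\<forall>l. l \<noteq> i \<longrightarrow> V$l$(kk i) \<le> ereal (w i - a$i + a$l - r))"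
  proof
    fix i show "V$i$(kk i) = ereal (w i) \<and>
            (\<forall>l. l \<noteq> i \<longrightarrow> V$l$(kk i) \<le> ereal (w i - a$i + a$l - r))"
      using gap[THEN spec[where x=i]] by (rule conjunct2)
  qed
  have inj: "inj kk" by (rule gap_inj[OF r gap'])
  fix y assume "y \<in> hball a r"
  then obtain z where z: "y = (\<chi> i. ereal (z i))" "\<forall>i l. z l - a$l \<le> z i - a$i + r"
    using hdist_le unfolding hball_def by blast
  define x :: "ereal^'p" where "x = (\<chi> k. if k \<in> range kk then ereal (z (inv kk k) - w (inv kk k)) else -\<infinity>)"
  have xk: "x$(kk i) = ereal (z i - w i)" for i unfolding x_def using inj by simp
  have "rmax_vec x" unfolding rmax_vec_def x_def by auto
  moreover have "(SUP k\<in>J. V$l$k + x$k) = ereal (z l)" for l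
  proof (rule antisym)
    show "(SUP k\<in>J. V$l$k + x$k) \<le> ereal (z l)"
    proof (rule SUP_least)
      fix k assume "k \<in> J"
      show "V$l$k + x$k \<le> ereal (z l)"
      proof (cases "k \<in> range kk")
        case False
        have eq: "V$l$k + -\<infinity> = -\<infinity>" using ent by (cases "V$l$k") auto
        have "x$k = -\<infinity>" using False unfolding x_def by simp
        then have "V$l$k + x$k = -\<infinity>" by (simp only: eq)
        then show ?thesis by (metis bot_ereal_def bot_least)
      next
        case True
        then obtain i where i: "k = kk i" by auto
        show ?thesis
        proof (cases "i = l")
          case True then show ?thesis using i xk gapD1[OF gap', of i] by simp
        next
          case False
          then have "l \<noteq> i" by simp
          then have "V$l$k \<le> ereal (w i - a$i + a$l - r)" unfolding i by (rule gapD2[OF gap'])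
          moreover have "z i - a$i \<le> z l - a$l + r" using z(2) by blast
          ultimately show ?thesis using i xk by (cases "V$l$k") auto
        qed
      qed
    qed
    have "V$l$(kk l) + x$(kk l) = ereal (z l)" using xk gapD1[OF gap', of l] by simp
    then show "ereal (z l) \<le> (SUP k\<in>J. V$l$k + x$k)" using SUP_upper[OF kkJ[of l], of "\<lambda>k. V$l$k + x$k"] by simp
  qed
  ultimately show "y \<in> Col J V" unfolding Col_def z(1) by auto
qed


lemma inrad_nonneg: "0 \<le> inrad C"
proof (rule ereal_le_epsilon2)
  fix e :: real assume e: "0 < e"
  have "hball (0::real^'a) (-e) \<subseteq> C" using hball_neg[of "-e"] e by auto
  then have "ereal (-e) \<le> inrad C" unfolding inrad_def by (blast intro: Sup_upper)
  then show "0 \<le> inrad C + ereal e" by (cases "inrad C") auto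
qed

lemma inrad_mono: "C \<subseteq> D \<Longrightarrow> inrad C \<le> inrad D"
  unfolding inrad_def by (rule Sup_subset_mono) blast

lemma inrad_pos:
  assumes "0 < inrad C" shows "\<exists>a r. r > 0 \<and> hball a r \<subseteq> C"
proof -
  obtain x where x: "x \<in> {ereal r | r. \<exists>a. hball a r \<subseteq> C}" "0 < x"
    using assms unfolding inrad_def less_Sup_iff by blast
  then obtain r a where ra: "x = ereal r" "hball a r \<subseteq> C" by blast
  then have "r > 0" using x(2) by simp
  then show ?thesis using ra(2) by blast
qed

lemma inrad_le:
  assumes "0 \<le> M" "\<And>a r. r > 0 \<Longrightarrow> hball a r \<subseteq> C \<Longrightarrow> ereal r \<le> M"
  shows "inrad C \<le> M"
  unfolding inrad_def
proof (rule Sup_least, clarify)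
  fix r a assume h: "hball a r \<subseteq> C"
  show "ereal r \<le> M"
  proof (cases "r > 0")
    case True then show ?thesis using assms(2) h by blast
  next
    case False then have "ereal r \<le> 0" by simp
    then show ?thesis using assms(1) by (rule order_trans)
  qed
qed

lemma extreme_decomp:
  fixes V :: "ereal^'p^'n"
  assumes ent: "\<forall>i k. V$i$k \<noteq> \<infinity>" and ex: "extreme (Col J V) u" and x: "rmax_vec x"
  shows "finite F \<Longrightarrow> F \<noteq> {} \<Longrightarrow> F \<subseteq> J \<Longrightarrow> u = (\<chi> i. SUP k\<in>F. V$i$k + x$k) \<Longrightarrow>
    \<exists>k\<in>F. u = (\<chi> i. V$i$k + x$k)"
proof (induction F rule: finite_ne_induct)
  case (singleton k) then show ?case by simp
next
  case (insert k0 F)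
  have u: "u = (\<chi> i. max ((\<chi> i. SUP k\<in>{k0}. V$i$k + x$k)$i) ((\<chi> i. SUP k\<in>F. V$i$k + x$k)$i))"
    using insert.prems by (simp add: sup_max)
  have "(\<chi> i. SUP k\<in>{k0}. V$i$k + x$k) \<in> Col J V"
    using Col_mono[OF ent, of "{k0}" J] insert.prems x unfolding Col_def by blast
  moreover have "(\<chi> i. SUP k\<in>F. V$i$k + x$k) \<in> Col J V"
    using Col_mono[OF ent, of F J] insert.prems x unfolding Col_def by blast
  ultimately have "u = (\<chi> i. SUP k\<in>{k0}. V$i$k + x$k) \<or> u = (\<chi> i. SUP k\<in>F. V$i$k + x$k)"
    using ex u unfolding extreme_def by blast
  then show ?case
  proof
    assume "u = (\<chi> i. SUP k\<in>{k0}. V$i$k + x$k)" then show ?case by simp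
  next
    assume "u = (\<chi> i. SUP k\<in>F. V$i$k + x$k)"
    then show ?case using insert.IH insert.prems by blast
  qed
qed

lemma extreme_col:
  fixes V :: "ereal^'p^'n"
  assumes ent: "\<forall>i k. V$i$k \<noteq> \<infinity>" and ex: "extreme (Col J V) u"
  shows "\<exists>k\<in>J. \<exists>c. u = (\<chi> i. V$i$k + ereal c)"
proof -
  obtain x where x: "rmax_vec x" "u = (\<chi> i. SUP k\<in>J. V$i$k + x$k)"
    using ex unfolding extreme_def Col_def by auto
  have "J \<noteq> {}"
  proof
    assume "J = {}"
    then have "u = (\<chi> i. -\<infinity>)" using x(2) by (simp add: bot_ereal_def)
    then show False using ex unfolding extreme_def by simp
  qed
  then obtain k where k: "k \<in> J" "u = (\<chi> i. V$i$k + x$k)"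
    using extreme_decomp[OF ent ex x(1), of J] x(2) by auto
  have "x$k \<noteq> \<infinity>" using x(1) unfolding rmax_vec_def by auto
  moreover have "x$k \<noteq> -\<infinity>"
  proof
    assume xk: "x$k = -\<infinity>"
    have m: "V$i$k + x$k = -\<infinity>" for i using ent xk by (cases "V$i$k") auto
    have "(\<chi> i. V$i$k + x$k) = (\<chi> i. -\<infinity>)" by (simp only: m)
    then have "u = (\<chi> i. -\<infinity>)" using k(2) by (simp only:)
    then show False using ex unfolding extreme_def by simp
  qed
  ultimately obtain c where "x$k = ereal c" by (cases "x$k") auto
  then show ?thesis using k by auto
qed

lemma dir_shift:
  fixes V :: "ereal^'p^'n"
  assumes ent: "\<forall>i k. V$i$k \<noteq> \<infinity>"
  shows "{(\<chi> i. l + (\<chi> i. V$i$k + ereal c)$i) | l. l \<noteq> \<infinity>} = {(\<chi> i. l + (\<chi> i. V$i$k)$i) | l. l \<noteq> \<infinity>}"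
proof (intro equalityI subsetI)
  fix y assume "y \<in> {(\<chi> i. l + (\<chi> i. V$i$k + ereal c)$i) | l. l \<noteq> \<infinity>}"
  then obtain l where l: "l \<noteq> \<infinity>" "y = (\<chi> i. l + (V$i$k + ereal c))" by auto
  have "y = (\<chi> i. (l + ereal c) + V$i$k)" unfolding l by (simp add: ac_simps)
  moreover have "l + ereal c \<noteq> \<infinity>" using l(1) by (cases l) auto
  ultimately show "y \<in> {(\<chi> i. l + (\<chi> i. V$i$k)$i) | l. l \<noteq> \<infinity>}" by auto
next
  fix y assume "y \<in> {(\<chi> i. l + (\<chi> i. V$i$k)$i) | l. l \<noteq> \<infinity>}"
  then obtain l where l: "l \<noteq> \<infinity>" "y = (\<chi> i. l + V$i$k)" by auto
  have "(l - ereal c) + (V$i$k + ereal c) = l + V$i$k" for i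
    using l(1) ent by (cases l; cases "V$i$k") auto
  then have "y = (\<chi> i. (l - ereal c) + (\<chi> i. V$i$k + ereal c)$i)" unfolding l by simp
  moreover have "l - ereal c \<noteq> \<infinity>" using l(1) by (cases l) auto
  ultimately show "y \<in> {(\<chi> i. l + (\<chi> i. V$i$k + ereal c)$i) | l. l \<noteq> \<infinity>}" by blast
qed


lemma col_in:
  fixes V :: "ereal^'p^'n"
  assumes ent: "\<forall>i k. V$i$k \<noteq> \<infinity>" and k: "k \<in> J"
  shows "(\<chi> i. V$i$k) \<in> Col J V"
proof -
  have "(\<chi> i. V$i$k) = (\<chi> i. SUP k'\<in>{k}. V$i$k' + (\<chi> _. (0::ereal))$k')" by simp
  moreover have "rmax_vec (\<chi> _. (0::ereal))" unfolding rmax_vec_def by simp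
  ultimately have "(\<chi> i. V$i$k) \<in> Col {k} V" unfolding Col_def by blast
  then show ?thesis using Col_mono[OF ent, of "{k}" J] k by blast
qed

lemma below_eq:
  fixes V :: "ereal^'p^'n" and a :: "real^'n"
  assumes ent: "\<forall>i k. V$i$k \<noteq> \<infinity>" and r: "r > 0" and gap: "\<forall>i. V$i$(kk i) = ereal (w i) \<and>
            (\<forall>l. l \<noteq> i \<longrightarrow> V$l$(kk i) \<le> ereal (w i - a$i + a$l - r))"
    and v: "v \<in> Col (range kk) V" and le: "\<forall>l. v$l \<le> V$l$(kk i)" and eq: "v$i = V$i$(kk i)"
  shows "v = (\<chi> l. V$l$(kk i))"
proof -
  obtain y where y: "rmax_vec y" "v = (\<chi> i. SUP k\<in>range kk. V$i$k + y$k)"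
    using v unfolding Col_def by auto
  obtain k where k: "k \<in> range kk" "(SUP k\<in>range kk. V$i$k + y$k) = V$i$k + y$k"
    using SUP_attained[where F="range kk" and f="\<lambda>k. V$i$k + y$k", OF finite] by blast
  obtain i' where i': "k = kk i'" using k(1) by auto
  have sum: "V$i$(kk i') + y$(kk i') = ereal (w i)" using k(2) y(2) eq gapD1[OF gap, of i] i' by simp
  obtain b where b: "V$i$(kk i') = ereal b" using sum ent y(1) unfolding rmax_vec_def by (cases "V$i$(kk i')"; cases "y$(kk i')") auto
  obtain c where c: "y$(kk i') = ereal c" using sum y(1) b unfolding rmax_vec_def by (cases "y$(kk i')") auto
  have bc: "b + c = w i" using sum b c by simp
  have ii: "i' = i"
  proof (rule ccontr)
    assume ne: "i' \<noteq> i"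
    have "V$i$(kk i') \<le> ereal (w i' - a$i' + a$i - r)" by (rule gapD2[OF gap ne[symmetric]])
    then have "ereal b \<le> ereal (w i' - a$i' + a$i - r)" using b by simp
    moreover have "V$i'$(kk i') + y$(kk i') \<le> v$i'"
      unfolding y(2) by (auto intro: SUP_upper)
    moreover have "v$i' \<le> ereal (w i - a$i + a$i' - r)"
    proof -
      have "v$i' \<le> V$i'$(kk i)" using le by blast
      moreover have "V$i'$(kk i) \<le> ereal (w i - a$i + a$i' - r)" by (rule gapD2[OF gap ne])
      ultimately show ?thesis by (rule order_trans)
    qed
    ultimately have "w i' + c \<le> w i - a$i + a$i' - r" "b \<le> w i' - a$i' + a$i - r"
    proof -
      assume a1: "ereal b \<le> ereal (w i' - a$i' + a$i - r)"
        and a2: "V$i'$(kk i') + y$(kk i') \<le> v$i'" and a3: "v$i' \<le> ereal (w i - a$i + a$i' - r)"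
      have "ereal (w i' + c) \<le> v$i'" using a2 gapD1[OF gap, of i'] c by simp
      then have "ereal (w i' + c) \<le> ereal (w i - a$i + a$i' - r)" using a3 by (rule order_trans)
      then show "w i' + c \<le> w i - a$i + a$i' - r" "b \<le> w i' - a$i' + a$i - r" using a1 by simp_all
    qed
    then show False using bc r by linarith
  qed
  then have "c = 0" using bc gapD1[OF gap, of i] b by simp
  have "V$l$(kk i) \<le> v$l" for l
  proof -
    have "V$l$(kk i) + y$(kk i) \<le> v$l" unfolding y(2) by (auto intro: SUP_upper)
    then show ?thesis using c ii \<open>c = 0\<close> by simp
  qed
  then show ?thesis using le by (simp add: vec_eq_iff antisym)
qed

lemma col_extreme:
  fixes V :: "ereal^'p^'n" and a :: "real^'n"
  assumes ent: "\<forall>i k. V$i$k \<noteq> \<infinity>" and r: "r > 0" and gap: "\<forall>i. V$i$(kk i) = ereal (w i) \<and>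
            (\<forall>l. l \<noteq> i \<longrightarrow> V$l$(kk i) \<le> ereal (w i - a$i + a$l - r))"
  shows "extreme (Col (range kk) V) (\<chi> l. V$l$(kk i))"
  unfolding extreme_def
proof (intro conjI ballI impI)
  show "(\<chi> l. V$l$(kk i)) \<in> Col (range kk) V" using col_in[OF ent] by blast
  show "(\<chi> l. V$l$(kk i)) \<noteq> (\<chi> i. - \<infinity>)"
  proof
    assume "(\<chi> l. V$l$(kk i)) = (\<chi> i. - \<infinity>)"
    then have "V$i$(kk i) = -\<infinity>" by (simp add: vec_eq_iff)
    then show False using gapD1[OF gap, of i] by simp
  qed
  fix v u assume v: "v \<in> Col (range kk) V" and u: "u \<in> Col (range kk) V"
    and m: "(\<chi> l. V$l$(kk i)) = (\<chi> i. max (v$i) (u$i))"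
  have mm: "V$l$(kk i) = max (v$l) (u$l)" for l using m by (simp add: vec_eq_iff)
  then have "V$i$(kk i) = v$i \<or> V$i$(kk i) = u$i" by (auto simp: max_def)
  then show "(\<chi> l. V$l$(kk i)) = v \<or> (\<chi> l. V$l$(kk i)) = u"
  proof
    assume e: "V$i$(kk i) = v$i"
    have "\<forall>l. v$l \<le> V$l$(kk i)" using mm by simp
    then have "v = (\<chi> l. V$l$(kk i))"
      using below_eq[OF ent r gap v _ e[symmetric]] by blast
    then show ?thesis by simp
  next
    assume e: "V$i$(kk i) = u$i"
    have "\<forall>l. u$l \<le> V$l$(kk i)" using mm by simp
    then have "u = (\<chi> l. V$l$(kk i))"
      using below_eq[OF ent r gap u _ e[symmetric]] by blast
    then show ?thesis by simp
  qed
qed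

lemma dir_inj:
  fixes V :: "ereal^'p^'n" and a :: "real^'n"
  assumes ent: "\<forall>i k. V$i$k \<noteq> \<infinity>" and r: "r > 0" and gap: "\<forall>i. V$i$(kk i) = ereal (w i) \<and>
            (\<forall>l. l \<noteq> i \<longrightarrow> V$l$(kk i) \<le> ereal (w i - a$i + a$l - r))"
    and eq: "{(\<chi> m. l + (\<chi> m. V$m$(kk i))$m) | l. l \<noteq> \<infinity>} = {(\<chi> m. l + (\<chi> m. V$m$(kk j))$m) | l. l \<noteq> \<infinity>}"
  shows "i = j"
proof (rule ccontr)
  assume ne: "i \<noteq> j"
  have z: "(\<chi> m. V$m$(kk i)) = (\<chi> m. 0 + (\<chi> m. V$m$(kk i))$m)" by simp
  have "(\<chi> m. V$m$(kk i)) \<in> {(\<chi> m. l + (\<chi> m. V$m$(kk i))$m) | l. l \<noteq> \<infinity>}"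
    unfolding mem_Collect_eq by (rule exI[where x=0], rule conjI[OF z]) simp
  then have "(\<chi> m. V$m$(kk i)) \<in> {(\<chi> m. l + (\<chi> m. V$m$(kk j))$m) | l. l \<noteq> \<infinity>}"
    by (simp only: eq)
  then obtain l where l: "l \<noteq> \<infinity>" "(\<chi> m. V$m$(kk i)) = (\<chi> m. l + (\<chi> m. V$m$(kk j))$m)"
    unfolding mem_Collect_eq by blast
  have lm: "V$m$(kk i) = l + V$m$(kk j)" for m
  proof -
    have "(\<chi> m. V$m$(kk i))$m = (\<chi> m. l + (\<chi> m. V$m$(kk j))$m)$m" using l(2) by (rule arg_cong)
    then show ?thesis by simp
  qed
  have "ereal (w i) = l + V$i$(kk j)" using lm[of i] gapD1[OF gap, of i] by simp
  then obtain d where d: "l = ereal d" using l(1) ent by (cases l; cases "V$i$(kk j)") auto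
  have "ereal (w i) = ereal d + V$i$(kk j)" using lm[of i] gapD1[OF gap, of i] d by simp
  moreover have "V$i$(kk j) \<le> ereal (w j - a$j + a$i - r)" by (rule gapD2[OF gap ne])
  ultimately have 1: "w i - d \<le> w j - a$j + a$i - r" by (cases "V$i$(kk j)") auto
  have "V$j$(kk i) = ereal (d + w j)" using lm[of j] gapD1[OF gap, of j] d by simp
  moreover have "V$j$(kk i) \<le> ereal (w i - a$i + a$j - r)" by (rule gapD2[OF gap ne[symmetric]])
  ultimately have 2: "d + w j \<le> w i - a$i + a$j - r" by simp
  show False using 1 2 r by linarith
qed


lemma simplicial_range:
  fixes V :: "ereal^'p^'n" and a :: "real^'n"
  assumes ent: "\<forall>i k. V$i$k \<noteq> \<infinity>" and r: "r > 0" and gap: "\<forall>i. V$i$(kk i) = ereal (w i) \<and>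
            (\<forall>l. l \<noteq> i \<longrightarrow> V$l$(kk i) \<le> ereal (w i - a$i + a$l - r))"
  shows "simplicial (Col (range kk) V)"
proof -
  define D where "D k = {(\<chi> m. l + (\<chi> m. V$m$k)$m) | l. l \<noteq> \<infinity>}" for k
  have eqs: "ext_dirs (Col (range kk) V) = (\<lambda>i. D (kk i)) ` UNIV"
  proof (intro equalityI subsetI)
    fix X assume "X \<in> ext_dirs (Col (range kk) V)"
    then obtain u where u: "X = {(\<chi> i. l + u$i) | l. l \<noteq> \<infinity>}" "extreme (Col (range kk) V) u"
      unfolding ext_dirs_def by blast
    obtain k c where kc: "k \<in> range kk" "u = (\<chi> i. V$i$k + ereal c)"
      using extreme_col[OF ent u(2)] by blast
    have "X = D k" unfolding u(1) kc(2) D_def using dir_shift[OF ent] by blast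
    then show "X \<in> (\<lambda>i. D (kk i)) ` UNIV" using kc(1) by auto
  next
    fix X assume "X \<in> (\<lambda>i. D (kk i)) ` UNIV"
    then obtain i where i: "X = D (kk i)" by auto
    have "extreme (Col (range kk) V) (\<chi> l. V$l$(kk i))" by (rule col_extreme[OF ent r gap])
    then show "X \<in> ext_dirs (Col (range kk) V)" unfolding ext_dirs_def i D_def by blast
  qed
  have "inj (\<lambda>i. D (kk i))"
    by (rule injI) (rule dir_inj[OF ent r gap], unfold D_def[symmetric])
  then show ?thesis unfolding simplicial_def eqs by (simp add: card_image)
qed


lemma gap_split: "\<forall>i. kk i \<in> J \<and> P i \<Longrightarrow> (\<forall>i. kk i \<in> J) \<and> (\<forall>i. P i)"
  by blast

theorem corollary3p9:
  fixes V :: "ereal^'p^'n"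
  assumes entries: "\<forall>i k. V$i$k \<noteq> \<infinity>"
    and no_inf_row: "\<forall>i. \<exists>k. V$i$k \<noteq> -\<infinity>"
    and no_inf_col: "\<forall>k. \<exists>i. V$i$k \<noteq> -\<infinity>"
  shows "inrad (Col UNIV V) =
           (if CARD('p) < CARD('n) then 0
            else Max {inrad (Col J V) | J :: 'p set. card J = CARD('n)})
         \<and> (inrad (Col UNIV V) > 0 \<longrightarrow>
           (\<exists>J :: 'p set. card J = CARD('n) \<and> inrad (Col J V) = inrad (Col UNIV V)
                 \<and> simplicial (Col J V)))"
proof -
  have key: "\<exists>J :: 'p set. card J = CARD('n) \<and> hball a r \<subseteq> Col J V"
    if r: "r > 0" and sub: "hball a r \<subseteq> Col UNIV V" for a r
  proof -
    obtain kk w where g: "\<forall>i. kk i \<in> UNIV \<and> V$i$(kk i) = ereal (w i) \<and>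
            (\<forall>l. l \<noteq> i \<longrightarrow> V$l$(kk i) \<le> ereal (w i - a$i + a$l - r))"
      using ball_gap[OF entries r sub] by blast
    have gap': "\<forall>i. V$i$(kk i) = ereal (w i) \<and>
            (\<forall>l. l \<noteq> i \<longrightarrow> V$l$(kk i) \<le> ereal (w i - a$i + a$l - r))"
      using gap_split[OF g] by (rule conjunct2)
    have "inj kk" by (rule gap_inj[OF r gap'])
    then have "card (range kk) = CARD('n)" by (simp add: card_image)
    moreover have "hball a r \<subseteq> Col (range kk) V"
    proof (rule gap_ball[OF entries r])
      show "\<forall>i. kk i \<in> range kk \<and> V$i$(kk i) = ereal (w i) \<and>
            (\<forall>l. l \<noteq> i \<longrightarrow> V$l$(kk i) \<le> ereal (w i - a$i + a$l - r))"
      proof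
        fix i
        have "kk i \<in> range kk" by simp
        then show "kk i \<in> range kk \<and> V$i$(kk i) = ereal (w i) \<and>
            (\<forall>l. l \<noteq> i \<longrightarrow> V$l$(kk i) \<le> ereal (w i - a$i + a$l - r))"
          using gap'[THEN spec[where x=i]] by (rule conjI)
      qed
    qed
    ultimately show ?thesis by blast
  qed
  have np: "CARD('n) \<le> CARD('p)" if np1: "r > 0" and np2: "hball a r \<subseteq> Col UNIV V" for a r
  proof -
    obtain J :: "'p set" where "card J = CARD('n)" using key[OF np1 np2] by blast
    then show ?thesis using card_mono[OF finite subset_UNIV[of J]] by simp
  qed
  define S where "S = {inrad (Col J V) | J :: 'p set. card J = CARD('n)}"
  have part1: "inrad (Col UNIV V) = (if CARD('p) < CARD('n) then 0 else Max S)"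
  proof (cases "CARD('p) < CARD('n)")
    case True
    have "inrad (Col UNIV V) \<le> 0"
      by (rule inrad_le) (use np True in force)+
    then show ?thesis using True inrad_nonneg[of "Col UNIV V"] by simp
  next
    case False
    have finS: "finite S" unfolding S_def by (rule finite_image_set) simp
    obtain J0 :: "'p set" where J0: "card J0 = CARD('n)"
      using obtain_subset_with_card_n[of "CARD('n)" "UNIV :: 'p set"] False by force
    have J0S: "inrad (Col J0 V) \<in> S" unfolding S_def using J0 by blast
    have "Max S \<le> inrad (Col UNIV V)"
    proof (rule Max.boundedI[OF finS])
      show "S \<noteq> {}" using J0S by blast
      fix s assume "s \<in> S"
      then obtain J :: "'p set" where "s = inrad (Col J V)" unfolding S_def by blast
      then show "s \<le> inrad (Col UNIV V)" using inrad_mono[OF Col_mono[OF entries subset_UNIV[of J]]] by simp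
    qed
    moreover have "inrad (Col UNIV V) \<le> Max S"
    proof (rule inrad_le)
      show "0 \<le> Max S" using inrad_nonneg[of "Col J0 V"] Max_ge[OF finS J0S] by (rule order_trans)
      fix a r assume "r > 0" "hball a r \<subseteq> Col UNIV V"
      then obtain J :: "'p set" where J: "card J = CARD('n)" "hball a r \<subseteq> Col J V" using key by blast
      have "ereal r \<le> inrad (Col J V)" unfolding inrad_def using J(2) by (blast intro: Sup_upper)
      also have "\<dots> \<le> Max S" using J(1) finS by (intro Max_ge) (auto simp: S_def)
      finally show "ereal r \<le> Max S" .
    qed
    ultimately show ?thesis using False by simp
  qed
  moreover have "\<exists>J :: 'p set. card J = CARD('n) \<and> inrad (Col J V) = inrad (Col UNIV V)
                 \<and> simplicial (Col J V)" if pos: "inrad (Col UNIV V) > 0"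
  proof -
    have nlt: "\<not> CARD('p) < CARD('n)" using part1 pos by auto
    have finS: "finite S" unfolding S_def by (rule finite_image_set) simp
    obtain J0 :: "'p set" where J0: "card J0 = CARD('n)"
      using obtain_subset_with_card_n[of "CARD('n)" "UNIV :: 'p set"] nlt by force
    have "S \<noteq> {}" unfolding S_def using J0 by blast
    then have "Max S \<in> S" using finS by (rule Max_in[rotated])
    have Sm: "\<exists>J :: 'p set. card J = CARD('n) \<and> x = inrad (Col J V)" if "x \<in> S" for x
      using that unfolding S_def by blast
    obtain J :: "'p set" where J0: "card J = CARD('n)" "Max S = inrad (Col J V)"
      using Sm[OF \<open>Max S \<in> S\<close>] by blast
    have mx: "inrad (Col UNIV V) = Max S" using part1 nlt by simp
    have J: "card J = CARD('n)" "inrad (Col J V) = inrad (Col UNIV V)" using J0 mx by simp_all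
    have "0 < inrad (Col J V)" using J(2) pos by simp
    then obtain a r where ar: "r > 0" "hball a r \<subseteq> Col J V" using inrad_pos by blast
    obtain kk w where g: "\<forall>i. kk i \<in> J \<and> V$i$(kk i) = ereal (w i) \<and>
            (\<forall>l. l \<noteq> i \<longrightarrow> V$l$(kk i) \<le> ereal (w i - a$i + a$l - r))"
      using ball_gap[OF entries ar] by blast
    have gap': "\<forall>i. V$i$(kk i) = ereal (w i) \<and>
            (\<forall>l. l \<noteq> i \<longrightarrow> V$l$(kk i) \<le> ereal (w i - a$i + a$l - r))"
      using gap_split[OF g] by (rule conjunct2)
    have kkJ: "\<forall>i. kk i \<in> J" using gap_split[OF g] by (rule conjunct1)
    have "inj kk" by (rule gap_inj[OF ar(1) gap'])
    then have "card (range kk) = CARD('n)" by (simp add: card_image)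
    moreover have "range kk \<subseteq> J" using kkJ by auto
    ultimately have "range kk = J" using J(1) card_subset_eq[OF finite, of "range kk" J] by simp
    moreover have "simplicial (Col (range kk) V)"
      by (rule simplicial_range[OF entries ar(1) gap'])
    ultimately show ?thesis using J by blast
  qed
  ultimately show ?thesis unfolding S_def by blast
qed

end
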